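(* Every solid branchwise implicative weak BCC-algebra is branchwise commutative.
   Context: A weak BCC-algebra is a set $X$ with a binary operation $*$ and a constant $0$ satisfying, for all $x,y,z\in X$: (i) $((x*y)*(z*y))*(x*z)=0$; (ii) $x*x=0$; (iii) $x*0=x$; (iv) $x*y=y*x=0$ implies $x=y$. The relation $x\leqslant y$ iff $x*y=0$ is a partial order on $X$. Let $I(X)$ be the set of minimal elements of $X$ with respect to $\leqslant$. For $a\in I(X)$ the branch initiated by $a$ is $B(a)=\{x\in X: a\leqslant x\}$; "belonging to the same branch" means lying in a common $B(a)$. A weak BCC-algebra is called (left) solid if $(x*y)*z=(x*z)*y$ holds for all $x,y$ belonging to the same branch and all $z\in X$. It is branchwise implicative if $x*(y*x)=x$ for all $x,y$ belonging to the same branch, and branchwise commutative if $x*(x*y)=y*(y*x)$ for all $x,y$ belonging to the same branch. *)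

theory Defs
  imports Main
begin

definition weak_BCC :: "'a set \<Rightarrow> ('a \<Rightarrow> 'a \<Rightarrow> 'a) \<Rightarrow> 'a \<Rightarrow> bool" where
  "weak_BCC X m z \<longleftrightarrow>
     z \<in> X \<and> (\<forall>x\<in>X. \<forall>y\<in>X. m x y \<in> X) \<and>
     (\<forall>x\<in>X. \<forall>y\<in>X. \<forall>w\<in>X. m (m (m x y) (m w y)) (m x w) = z) \<and>
     (\<forall>x\<in>X. m x x = z) \<and>
     (\<forall>x\<in>X. m x z = x) \<and>
     (\<forall>x\<in>X. \<forall>y\<in>X. m x y = z \<and> m y x = z \<longrightarrow> x = y)"

definition bcc_le :: "('a \<Rightarrow> 'a \<Rightarrow> 'a) \<Rightarrow> 'a \<Rightarrow> 'a \<Rightarrow> 'a \<Rightarrow> bool" where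
  "bcc_le m z x y \<longleftrightarrow> m x y = z"

definition minimal_elems :: "'a set \<Rightarrow> ('a \<Rightarrow> 'a \<Rightarrow> 'a) \<Rightarrow> 'a \<Rightarrow> 'a set" where
  "minimal_elems X m z = {a \<in> X. \<forall>x\<in>X. bcc_le m z x a \<longrightarrow> x = a}"

definition branch :: "'a set \<Rightarrow> ('a \<Rightarrow> 'a \<Rightarrow> 'a) \<Rightarrow> 'a \<Rightarrow> 'a \<Rightarrow> 'a set" where
  "branch X m z a = {x \<in> X. bcc_le m z a x}"

definition same_branch :: "'a set \<Rightarrow> ('a \<Rightarrow> 'a \<Rightarrow> 'a) \<Rightarrow> 'a \<Rightarrow> 'a \<Rightarrow> 'a \<Rightarrow> bool" where
  "same_branch X m z x y \<longleftrightarrow>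
     (\<exists>a\<in>minimal_elems X m z. x \<in> branch X m z a \<and> y \<in> branch X m z a)"

definition solid :: "'a set \<Rightarrow> ('a \<Rightarrow> 'a \<Rightarrow> 'a) \<Rightarrow> 'a \<Rightarrow> bool" where
  "solid X m z \<longleftrightarrow> (\<forall>x\<in>X. \<forall>y\<in>X. \<forall>w\<in>X.
      same_branch X m z x y \<longrightarrow> m (m x y) w = m (m x w) y)"

definition branchwise_implicative :: "'a set \<Rightarrow> ('a \<Rightarrow> 'a \<Rightarrow> 'a) \<Rightarrow> 'a \<Rightarrow> bool" where
  "branchwise_implicative X m z \<longleftrightarrow> (\<forall>x\<in>X. \<forall>y\<in>X.
      same_branch X m z x y \<longrightarrow> m x (m y x) = x)"

definition branchwise_commutative :: "'a set \<Rightarrow> ('a \<Rightarrow> 'a \<Rightarrow> 'a) \<Rightarrow> 'a \<Rightarrow> bool" where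
  "branchwise_commutative X m z \<longleftrightarrow> (\<forall>x\<in>X. \<forall>y\<in>X.
      same_branch X m z x y \<longrightarrow> m x (m x y) = m y (m y x))"

end

theory Submission
  imports Defs
begin

theorem theorem3p8:
  fixes X :: "'a set" and m :: "'a \<Rightarrow> 'a \<Rightarrow> 'a" and z :: 'a
  assumes "weak_BCC X m z"
    and "solid X m z"
    and "branchwise_implicative X m z"
  shows "branchwise_commutative X m z"
proof -
  have z: "z \<in> X" and cl: "\<And>x y. x \<in> X \<Longrightarrow> y \<in> X \<Longrightarrow> m x y \<in> X"
    and A1: "\<And>x y w. x \<in> X \<Longrightarrow> y \<in> X \<Longrightarrow> w \<in> X \<Longrightarrow> m (m (m x y) (m w y)) (m x w) = z"
    and A2: "\<And>x. x \<in> X \<Longrightarrow> m x x = z"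
    and A3: "\<And>x. x \<in> X \<Longrightarrow> m x z = x"
    and A4: "\<And>x y. x \<in> X \<Longrightarrow> y \<in> X \<Longrightarrow> m x y = z \<Longrightarrow> m y x = z \<Longrightarrow> x = y"
    using assms(1) unfolding weak_BCC_def by blast+
  have sol: "\<And>x y w. x \<in> X \<Longrightarrow> y \<in> X \<Longrightarrow> w \<in> X \<Longrightarrow> same_branch X m z x y \<Longrightarrow> m (m x y) w = m (m x w) y"
    using assms(2) unfolding solid_def by blast
  have imp: "\<And>x y. x \<in> X \<Longrightarrow> y \<in> X \<Longrightarrow> same_branch X m z x y \<Longrightarrow> m x (m y x) = x"
    using assms(3) unfolding branchwise_implicative_def by blast
  have L5: "\<And>p q w. p \<in> X \<Longrightarrow> q \<in> X \<Longrightarrow> w \<in> X \<Longrightarrow> m p q = z \<Longrightarrow> m (m w q) (m w p) = z"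
  proof -
    fix p q w assume h: "p \<in> X" "q \<in> X" "w \<in> X" "m p q = z"
    have "m (m (m w q) (m p q)) (m w p) = z" using A1[OF h(3) h(2) h(1)] .
    thus "m (m w q) (m w p) = z" using h A3 cl by simp
  qed
  have mono: "\<And>p q w. p \<in> X \<Longrightarrow> q \<in> X \<Longrightarrow> w \<in> X \<Longrightarrow> m p q = z \<Longrightarrow> m (m w (m w p)) (m w (m w q)) = z"
    proof -
    fix p q w assume h: "p \<in> X" "q \<in> X" "w \<in> X" "m p q = z"
    have "m (m w q) (m w p) = z" by (rule L5[OF h])
    thus "m (m w (m w p)) (m w (m w q)) = z" by (rule L5[OF cl[OF h(3) h(2)] cl[OF h(3) h(1)] h(3)])
  qed
  have sbsym: "\<And>x y. same_branch X m z x y \<Longrightarrow> same_branch X m z y x"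
    unfolding same_branch_def by blast
  have P: "\<And>p q. p \<in> X \<Longrightarrow> q \<in> X \<Longrightarrow> m p q = z \<Longrightarrow> same_branch X m z p q \<Longrightarrow> p = m q (m q p)"
  proof -
    fix p q assume h: "p \<in> X" "q \<in> X" "m p q = z" "same_branch X m z p q"
    have "m (m q (m q p)) p = m (m q p) (m q p)" using sol[of q p "m q p"] h cl sbsym by simp
    hence 1: "m (m q (m q p)) p = z" using A2 cl h by simp
    have "m (m (m p (m q p)) (m q (m q p))) (m p q) = z" using A1[OF h(1) cl[OF h(2) h(1)] h(2)] .
    hence "m p (m q (m q p)) = z" using imp h A3 cl by simp
    thus "p = m q (m q p)" using A4[OF h(1) cl[OF h(2) cl[OF h(2) h(1)]]] 1 by blast
  qed
  show ?thesis unfolding branchwise_commutative_def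
  proof (intro ballI impI)
    fix x y assume x: "x \<in> X" and y: "y \<in> X" and sb: "same_branch X m z x y"
    then obtain a where a: "a \<in> minimal_elems X m z" "x \<in> branch X m z a" "y \<in> branch X m z a"
      unfolding same_branch_def by blast
    have aX: "a \<in> X" using a(1) unfolding minimal_elems_def by blast
    have ax: "m a x = z" and ay: "m a y = z" using a unfolding branch_def bcc_le_def by auto
    have gen: "\<And>x y. x \<in> branch X m z a \<Longrightarrow> y \<in> branch X m z a \<Longrightarrow> x \<in> X \<Longrightarrow> y \<in> X \<Longrightarrow>
        m a x = z \<Longrightarrow> m a y = z \<Longrightarrow> same_branch X m z x y \<Longrightarrow>
        m (m x (m x y)) y = z \<and> m (m x (m x y)) x = z \<and> m a (m x (m x y)) = z"
    proof -
      fix x y assume bx: "x \<in> branch X m z a" and by': "y \<in> branch X m z a" and x: "x \<in> X" and y: "y \<in> X"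
        and ax: "m a x = z" and ay: "m a y = z" and sb: "same_branch X m z x y"
      have "m (m x y) (m x y) = m (m x (m x y)) y" using sol[of x y "m x y"] x y sb cl by simp
      hence 1: "m (m x (m x y)) y = z" using A2 cl x y by simp
      have sxx: "same_branch X m z x x" using sb unfolding same_branch_def by blast
      have e2: "m (m x x) (m x y) = m (m x (m x y)) x" using sol[of x x "m x y"] x y sxx cl by simp
      have "m (m (m a y) (m x y)) (m a x) = z" using A1[OF aX y x] .
      hence zxy: "m z (m x y) = z" using ax ay A3 cl x y z by simp
      have 2: "m (m x (m x y)) x = z" using e2 zxy A2 x y cl by simp
      have sax: "same_branch X m z a x" using a(1) bx aX unfolding same_branch_def branch_def bcc_le_def
        using A2 by auto
      have 3: "a = m x (m x a)" using P[OF aX x ax sax] .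
      have "m (m x (m x a)) (m x (m x y)) = z" using mono[OF aX y x ay] .
      hence "m a (m x (m x y)) = z" by (simp only: 3[symmetric])
      with 1 2 show "m (m x (m x y)) y = z \<and> m (m x (m x y)) x = z \<and> m a (m x (m x y)) = z" by simp
    qed
    define u where "u = m x (m x y)"
    define v where "v = m y (m y x)"
    have uX: "u \<in> X" and vX: "v \<in> X" using u_def v_def cl x y by auto
    have U: "m u y = z" "m u x = z" "m a u = z" using gen[OF a(2) a(3) x y ax ay sb] u_def by auto
    have V: "m v x = z" "m v y = z" "m a v = z" using gen[OF a(3) a(2) y x ay ax sbsym[OF sb]] v_def by auto
    have ubr: "u \<in> branch X m z a" and vbr: "v \<in> branch X m z a"
      using U V uX vX unfolding branch_def bcc_le_def by auto
    have suy: "same_branch X m z u y" using a ubr unfolding same_branch_def by blast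
    have svx: "same_branch X m z v x" using a vbr unfolding same_branch_def by blast
    have u1: "u = m y (m y u)" using P[OF uX y U(1) suy] .
    have v1: "v = m x (m x v)" using P[OF vX x V(1) svx] .
    have "m (m y (m y u)) (m y (m y x)) = z" using mono[OF uX x y U(2)] .
    hence uv: "m u v = z" by (simp only: u1[symmetric] v_def[symmetric])
    have "m (m x (m x v)) (m x (m x y)) = z" using mono[OF vX y x V(2)] .
    hence vu: "m v u = z" by (simp only: v1[symmetric] u_def[symmetric])
    show "m x (m x y) = m y (m y x)" using A4[OF uX vX uv vu] u_def v_def by simp
  qed
qed

end
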